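(* Let $M$ be a commutative and cocommutative Hopf algebra over $\mathbb{C}$, let $A$ be a commutative $\mathbb{C}$-algebra, and let $r_1,r_2$ be $A$-valued bicharacters on $M$. If $r=r_1\circ r_2$, then \[ \mathrm{EQ}_{r}=\mathrm{EQ}_{r_1}\circ\mathrm{EQ}_{r_2}. \]
   Context: For a Hopf algebra $M$ with coproduct $\Delta$ and counit $\eta$, Sweedler notation is used: $\Delta(a)=\sum a'\otimes a''$, $\Delta^2(a)=\sum a'\otimes a''\otimes a'''$. An $A$-valued bicharacter on $M$ is a linear map $r:M\otimes M\to A$ such that for all $a,b,c\in M$: $r(1\otimes a)=\eta(a)=r(a\otimes 1)$, $r(ab\otimes c)=\sum r(a\otimes c')r(b\otimes c'')$, and $r(a\otimes bc)=\sum r(a'\otimes b)r(a''\otimes c)$. The convolution of bicharacters is $(r_1\circ r_2)(a\otimes b)=\sum r_1(a'\otimes b')r_2(a''\otimes b'')$. Write $M_A=M\otimes_{\mathbb{C}}A$. The map $\mathrm{EQ}_r:M\to M_A$ is $\mathrm{EQ}_r(m)=\sum r(m'\otimes m'')m'''$, extended $A$-linearly to $M_A\to M_A$; the composition $\mathrm{EQ}_{r_1}\circ\mathrm{EQ}_{r_2}$ uses this $A$-linear extension of $\mathrm{EQ}_{r_1}$. *)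

theory Defs
  imports Complex_Main
begin

text \<open>The Hopf algebra M over the complex numbers is represented by a basis: M is the
space of finitely supported functions 'b => complex (every complex vector space is of
this form).  M (x) M and M (x) M (x) M are then finitely supported functions on
'b * 'b and 'b * 'b * 'b.  The structure maps are given on basis elements and extended
linearly.  A commutative C-algebra A is a commutative ring 'a with a ring homomorphism
iota : complex => 'a; M_A = M (x) A is the space of finitely supported 'b => 'a.
A linear map M (x) M -> A is given by its values r x y on basis pairs.\<close>

definition supp :: "('x \<Rightarrow> 'c::zero) \<Rightarrow> 'x set" where
  "supp f = {x. f x \<noteq> 0}"

definition fs :: "('x \<Rightarrow> 'c::zero) \<Rightarrow> bool" where
  "fs f \<longleftrightarrow> finite (supp f)"

definition ind :: "'b \<Rightarrow> 'b \<Rightarrow> complex" where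
  "ind b = (\<lambda>z. if z = b then 1 else 0)"

definition tens :: "('b \<Rightarrow> complex) \<Rightarrow> ('b \<Rightarrow> complex) \<Rightarrow> ('b \<times> 'b \<Rightarrow> complex)" where
  "tens f g = (\<lambda>(x, y). f x * g y)"

definition mult :: "('b \<Rightarrow> 'b \<Rightarrow> 'b \<Rightarrow> complex) \<Rightarrow> ('b \<Rightarrow> complex) \<Rightarrow> ('b \<Rightarrow> complex) \<Rightarrow> ('b \<Rightarrow> complex)" where
  "mult mu f g = (\<lambda>z. \<Sum>x\<in>supp f. \<Sum>y\<in>supp g. f x * g y * mu x y z)"

definition comult :: "('b \<Rightarrow> 'b \<times> 'b \<Rightarrow> complex) \<Rightarrow> ('b \<Rightarrow> complex) \<Rightarrow> ('b \<times> 'b \<Rightarrow> complex)" where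
  "comult delta f = (\<lambda>p. \<Sum>a\<in>supp f. f a * delta a p)"

definition counit :: "('b \<Rightarrow> complex) \<Rightarrow> ('b \<Rightarrow> complex) \<Rightarrow> complex" where
  "counit eps f = (\<Sum>a\<in>supp f. f a * eps a)"

definition mult2 :: "('b \<Rightarrow> 'b \<Rightarrow> 'b \<Rightarrow> complex) \<Rightarrow> ('b \<times> 'b \<Rightarrow> complex) \<Rightarrow> ('b \<times> 'b \<Rightarrow> complex) \<Rightarrow> ('b \<times> 'b \<Rightarrow> complex)" where
  "mult2 mu F G = (\<lambda>(z, w). \<Sum>(x, y)\<in>supp F. \<Sum>(x', y')\<in>supp G.
      F (x, y) * G (x', y') * mu x x' z * mu y y' w)"

definition delta_id :: "('b \<Rightarrow> 'b \<times> 'b \<Rightarrow> complex) \<Rightarrow> ('b \<times> 'b \<Rightarrow> complex) \<Rightarrow> ('b \<times> 'b \<times> 'b \<Rightarrow> complex)" where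
  "delta_id delta F = (\<lambda>(x, y, z). \<Sum>(u, v)\<in>supp F. F (u, v) * delta u (x, y) * ind v z)"

definition id_delta :: "('b \<Rightarrow> 'b \<times> 'b \<Rightarrow> complex) \<Rightarrow> ('b \<times> 'b \<Rightarrow> complex) \<Rightarrow> ('b \<times> 'b \<times> 'b \<Rightarrow> complex)" where
  "id_delta delta F = (\<lambda>(x, y, z). \<Sum>(u, v)\<in>supp F. F (u, v) * ind u x * delta v (y, z))"

definition eps_id :: "('b \<Rightarrow> complex) \<Rightarrow> ('b \<times> 'b \<Rightarrow> complex) \<Rightarrow> ('b \<Rightarrow> complex)" where
  "eps_id eps F = (\<lambda>z. \<Sum>(u, v)\<in>supp F. F (u, v) * eps u * ind v z)"

definition id_eps :: "('b \<Rightarrow> complex) \<Rightarrow> ('b \<times> 'b \<Rightarrow> complex) \<Rightarrow> ('b \<Rightarrow> complex)" where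
  "id_eps eps F = (\<lambda>z. \<Sum>(u, v)\<in>supp F. F (u, v) * ind u z * eps v)"

definition mult_S_id :: "('b \<Rightarrow> 'b \<Rightarrow> 'b \<Rightarrow> complex) \<Rightarrow> ('b \<Rightarrow> 'b \<Rightarrow> complex) \<Rightarrow> ('b \<times> 'b \<Rightarrow> complex) \<Rightarrow> ('b \<Rightarrow> complex)" where
  "mult_S_id mu S F = (\<lambda>z. \<Sum>(u, v)\<in>supp F. F (u, v) * mult mu (S u) (ind v) z)"

definition mult_id_S :: "('b \<Rightarrow> 'b \<Rightarrow> 'b \<Rightarrow> complex) \<Rightarrow> ('b \<Rightarrow> 'b \<Rightarrow> complex) \<Rightarrow> ('b \<times> 'b \<Rightarrow> complex) \<Rightarrow> ('b \<Rightarrow> complex)" where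
  "mult_id_S mu S F = (\<lambda>z. \<Sum>(u, v)\<in>supp F. F (u, v) * mult mu (ind u) (S v) z)"

definition hopf_algebra ::
  "('b \<Rightarrow> 'b \<Rightarrow> 'b \<Rightarrow> complex) \<Rightarrow> ('b \<Rightarrow> complex) \<Rightarrow> ('b \<Rightarrow> 'b \<times> 'b \<Rightarrow> complex)
   \<Rightarrow> ('b \<Rightarrow> complex) \<Rightarrow> ('b \<Rightarrow> 'b \<Rightarrow> complex) \<Rightarrow> bool" where
  "hopf_algebra mu one delta eps S \<longleftrightarrow>
     (\<forall>x y. fs (mu x y)) \<and> fs one \<and> (\<forall>a. fs (delta a)) \<and> (\<forall>a. fs (S a)) \<and>
     (\<forall>f g h. fs f \<longrightarrow> fs g \<longrightarrow> fs h \<longrightarrow>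
        mult mu (mult mu f g) h = mult mu f (mult mu g h)) \<and>
     (\<forall>f. fs f \<longrightarrow> mult mu one f = f \<and> mult mu f one = f) \<and>
     (\<forall>f. fs f \<longrightarrow> delta_id delta (comult delta f) = id_delta delta (comult delta f)) \<and>
     (\<forall>f. fs f \<longrightarrow> eps_id eps (comult delta f) = f \<and> id_eps eps (comult delta f) = f) \<and>
     (\<forall>f g. fs f \<longrightarrow> fs g \<longrightarrow>
        comult delta (mult mu f g) = mult2 mu (comult delta f) (comult delta g)) \<and>
     comult delta one = tens one one \<and>
     (\<forall>f g. fs f \<longrightarrow> fs g \<longrightarrow> counit eps (mult mu f g) = counit eps f * counit eps g) \<and>
     counit eps one = 1 \<and>
     (\<forall>f. fs f \<longrightarrow>
        mult_S_id mu S (comult delta f) = (\<lambda>z. counit eps f * one z) \<and>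
        mult_id_S mu S (comult delta f) = (\<lambda>z. counit eps f * one z))"

definition commutative :: "('b \<Rightarrow> 'b \<Rightarrow> 'b \<Rightarrow> complex) \<Rightarrow> bool" where
  "commutative mu \<longleftrightarrow> (\<forall>f g. fs f \<longrightarrow> fs g \<longrightarrow> mult mu f g = mult mu g f)"

definition cocommutative :: "('b \<Rightarrow> 'b \<times> 'b \<Rightarrow> complex) \<Rightarrow> bool" where
  "cocommutative delta \<longleftrightarrow>
     (\<forall>f. fs f \<longrightarrow> (\<forall>x y. comult delta f (x, y) = comult delta f (y, x)))"

definition calg_hom :: "(complex \<Rightarrow> 'a::comm_ring_1) \<Rightarrow> bool" where
  "calg_hom iota \<longleftrightarrow> iota 1 = 1 \<and> (\<forall>x y. iota (x + y) = iota x + iota y) \<and>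
     (\<forall>x y. iota (x * y) = iota x * iota y)"

definition rlin :: "(complex \<Rightarrow> 'a::comm_ring_1) \<Rightarrow> ('b \<Rightarrow> 'b \<Rightarrow> 'a) \<Rightarrow> ('b \<times> 'b \<Rightarrow> complex) \<Rightarrow> 'a" where
  "rlin iota r F = (\<Sum>(u, v)\<in>supp F. iota (F (u, v)) * r u v)"

definition bicharacter ::
  "('b \<Rightarrow> 'b \<Rightarrow> 'b \<Rightarrow> complex) \<Rightarrow> ('b \<Rightarrow> complex) \<Rightarrow> ('b \<Rightarrow> 'b \<times> 'b \<Rightarrow> complex)
   \<Rightarrow> ('b \<Rightarrow> complex) \<Rightarrow> (complex \<Rightarrow> 'a::comm_ring_1) \<Rightarrow> ('b \<Rightarrow> 'b \<Rightarrow> 'a) \<Rightarrow> bool" where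
  "bicharacter mu one delta eps iota r \<longleftrightarrow>
     (\<forall>a. fs a \<longrightarrow> rlin iota r (tens one a) = iota (counit eps a) \<and>
                  rlin iota r (tens a one) = iota (counit eps a)) \<and>
     (\<forall>a b c. fs a \<longrightarrow> fs b \<longrightarrow> fs c \<longrightarrow>
        rlin iota r (tens (mult mu a b) c) =
          (\<Sum>(u, v)\<in>supp (comult delta c).
             iota (comult delta c (u, v)) * rlin iota r (tens a (ind u)) * rlin iota r (tens b (ind v)))) \<and>
     (\<forall>a b c. fs a \<longrightarrow> fs b \<longrightarrow> fs c \<longrightarrow>
        rlin iota r (tens a (mult mu b c)) =
          (\<Sum>(u, v)\<in>supp (comult delta a).
             iota (comult delta a (u, v)) * rlin iota r (tens (ind u) b) * rlin iota r (tens (ind v) c)))"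

definition conv :: "(complex \<Rightarrow> 'a::comm_ring_1) \<Rightarrow> ('b \<Rightarrow> 'b \<times> 'b \<Rightarrow> complex)
   \<Rightarrow> ('b \<Rightarrow> 'b \<Rightarrow> 'a) \<Rightarrow> ('b \<Rightarrow> 'b \<Rightarrow> 'a) \<Rightarrow> ('b \<Rightarrow> 'b \<Rightarrow> 'a)" where
  "conv iota delta r1 r2 = (\<lambda>x y.
     \<Sum>(u, v)\<in>supp (delta x). \<Sum>(u', v')\<in>supp (delta y).
       iota (delta x (u, v)) * iota (delta y (u', v')) * r1 u u' * r2 v v')"

definition comult2 :: "('b \<Rightarrow> 'b \<times> 'b \<Rightarrow> complex) \<Rightarrow> ('b \<Rightarrow> complex) \<Rightarrow> ('b \<times> 'b \<times> 'b \<Rightarrow> complex)" where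
  "comult2 delta m = delta_id delta (comult delta m)"

definition EQ :: "(complex \<Rightarrow> 'a::comm_ring_1) \<Rightarrow> ('b \<Rightarrow> 'b \<times> 'b \<Rightarrow> complex)
   \<Rightarrow> ('b \<Rightarrow> 'b \<Rightarrow> 'a) \<Rightarrow> ('b \<Rightarrow> complex) \<Rightarrow> ('b \<Rightarrow> 'a)" where
  "EQ iota delta r m = (\<lambda>z. \<Sum>(x, y, w)\<in>supp (comult2 delta m).
      iota (comult2 delta m (x, y, w)) * r x y * iota (ind w z))"

definition EQ_A :: "(complex \<Rightarrow> 'a::comm_ring_1) \<Rightarrow> ('b \<Rightarrow> 'b \<times> 'b \<Rightarrow> complex)
   \<Rightarrow> ('b \<Rightarrow> 'b \<Rightarrow> 'a) \<Rightarrow> ('b \<Rightarrow> 'a) \<Rightarrow> ('b \<Rightarrow> 'a)" where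
  "EQ_A iota delta r F = (\<lambda>z. \<Sum>b\<in>supp F. F b * EQ iota delta r (ind b) z)"

end

theory Submission
  imports Defs
begin

lemma sum_supp_eq:
  assumes "finite S" "\<And>p. F p \<noteq> 0 \<Longrightarrow> p \<in> S" "\<And>p. F p = 0 \<Longrightarrow> g p = 0"
  shows "sum g (supp F) = sum g S"
  by (rule sum.mono_neutral_left) (use assms in \<open>auto simp: supp_def\<close>)

lemma sum_prod2: "(\<Sum>(x,y)\<in>A\<times>B. g x y) = (\<Sum>x\<in>A. \<Sum>y\<in>B. g x y)"
  by (simp add: sum.cartesian_product)

lemma sum_prod3: "(\<Sum>(x,y,w)\<in>A\<times>B\<times>C. g x y w) = (\<Sum>x\<in>A. \<Sum>y\<in>B. \<Sum>w\<in>C. g x y w)"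
  by (simp add: sum.cartesian_product)

lemma comult_ind: "comult delta (ind a) = delta a"
proof -
  have "supp (ind a) = {a}" by (auto simp: supp_def ind_def)
  then show ?thesis by (simp add: comult_def ind_def)
qed

lemma fs_ind: "fs (ind a)"
proof -
  have "supp (ind a) = {a}" by (auto simp: supp_def ind_def)
  then show ?thesis by (simp add: fs_def)
qed

lemma calg_zero: "calg_hom iota \<Longrightarrow> iota 0 = 0"
  unfolding calg_hom_def by (metis add_cancel_right_right add_0)

lemma calg_sum: "calg_hom iota \<Longrightarrow> iota (sum f A) = (\<Sum>x\<in>A. iota (f x))"
proof (induction A rule: infinite_finite_induct)
  case (infinite A) then show ?case by (simp add: calg_zero)
next
  case empty then show ?case by (simp add: calg_zero)
next
  case (insert x F) then show ?case by (simp add: calg_hom_def)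
qed

lemma calg_mult: "calg_hom iota \<Longrightarrow> iota (x * y) = iota x * iota y"
  by (simp add: calg_hom_def)

lemma calg_ind: "calg_hom iota \<Longrightarrow> iota (ind w z) = (if z = w then 1 else 0)"
  by (simp add: ind_def calg_hom_def calg_zero)

locale EQs =
  fixes delta :: "'b \<Rightarrow> 'b \<times> 'b \<Rightarrow> complex" and m :: "'b \<Rightarrow> complex"
    and iota :: "complex \<Rightarrow> 'a::comm_ring_1"
  assumes fsd: "\<And>a. fs (delta a)" and fsm: "fs m"
    and coass: "\<And>f. fs f \<Longrightarrow> delta_id delta (comult delta f) = id_delta delta (comult delta f)"
    and cocom: "\<And>a x y. delta a (x,y) = delta a (y,x)"
    and hom: "calg_hom iota"
begin

definition cl where "cl X = X \<union> (\<Union>a\<in>X. fst ` supp (delta a) \<union> snd ` supp (delta a))"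
definition Tn where "Tn n = (cl ^^ n) (supp m)"
abbreviation T where "T \<equiv> Tn 5"

lemma fin_Tn: "finite (Tn n)"
proof (induction n)
  case 0 then show ?case using fsm by (simp add: Tn_def fs_def)
next
  case (Suc n)
  have "finite (cl (Tn n))" unfolding cl_def using Suc fsd by (auto simp: fs_def)
  then show ?case by (simp add: Tn_def)
qed

lemma Tn_mono: "n \<le> k \<Longrightarrow> Tn n \<subseteq> Tn k"
  by (rule lift_Suc_mono_le[of Tn]) (auto simp: Tn_def cl_def)

lemma inT: "x \<in> Tn n \<Longrightarrow> n \<le> 5 \<Longrightarrow> x \<in> T"
  using Tn_mono by blast

lemma delta_Tn: "a \<in> Tn n \<Longrightarrow> delta a (x,y) \<noteq> 0 \<Longrightarrow> x \<in> Tn (Suc n) \<and> y \<in> Tn (Suc n)"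
  by (auto simp: Tn_def cl_def supp_def image_iff)

lemma Dm_Tn: "comult delta m (u,v) \<noteq> 0 \<Longrightarrow> u \<in> Tn 1 \<and> v \<in> Tn 1"
proof -
  assume "comult delta m (u,v) \<noteq> 0"
  then obtain a where "a \<in> supp m" "m a * delta a (u,v) \<noteq> 0"
    unfolding comult_def by (auto elim: sum.not_neutral_contains_not_neutral)
  then show ?thesis using delta_Tn[of a 0 u v] by (auto simp: Tn_def)
qed


lemma delta_id_T:
  assumes "\<And>u v. F (u,v) \<noteq> 0 \<Longrightarrow> u \<in> T \<and> v \<in> T"
  shows "delta_id delta F (x,y,w) = (\<Sum>u\<in>T. F (u,w) * delta u (x,y))"
proof -
  have "delta_id delta F (x,y,w) = (\<Sum>(u,v)\<in>T\<times>T. F (u,v) * delta u (x,y) * ind v w)"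
    unfolding delta_id_def by (simp, rule sum_supp_eq) (use assms fin_Tn in auto)
  also have "\<dots> = (\<Sum>u\<in>T. \<Sum>v\<in>T. F (u,v) * delta u (x,y) * ind v w)" by (rule sum_prod2)
  also have "\<dots> = (\<Sum>u\<in>T. F (u,w) * delta u (x,y))"
  proof (rule sum.cong[OF refl])
    fix u assume "u \<in> T"
    have "(\<Sum>v\<in>T. F (u,v) * delta u (x,y) * ind v w) = (\<Sum>v\<in>T. if w = v then F (u,v) * delta u (x,y) else 0)"
      by (rule sum.cong) (auto simp: ind_def)
    also have "\<dots> = F (u,w) * delta u (x,y)" using fin_Tn assms[of u w] by (auto simp: sum.delta')
    finally show "(\<Sum>v\<in>T. F (u,v) * delta u (x,y) * ind v w) = F (u,w) * delta u (x,y)" .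
  qed
  finally show ?thesis .
qed

lemma id_delta_T:
  assumes "\<And>u v. F (u,v) \<noteq> 0 \<Longrightarrow> u \<in> T \<and> v \<in> T"
  shows "id_delta delta F (x,y,z) = (\<Sum>v\<in>T. F (x,v) * delta v (y,z))"
proof -
  have "id_delta delta F (x,y,z) = (\<Sum>(u,v)\<in>T\<times>T. F (u,v) * ind u x * delta v (y,z))"
    unfolding id_delta_def by (simp, rule sum_supp_eq) (use assms fin_Tn in auto)
  also have "\<dots> = (\<Sum>v\<in>T. \<Sum>u\<in>T. F (u,v) * ind u x * delta v (y,z))"
    unfolding sum_prod2 by (rule sum.swap)
  also have "\<dots> = (\<Sum>v\<in>T. F (x,v) * delta v (y,z))"
  proof (rule sum.cong[OF refl])
    fix v assume "v \<in> T"
    have "(\<Sum>u\<in>T. F (u,v) * ind u x * delta v (y,z)) = (\<Sum>u\<in>T. if x = u then F (u,v) * delta v (y,z) else 0)"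
      by (rule sum.cong) (auto simp: ind_def)
    also have "\<dots> = F (x,v) * delta v (y,z)" using fin_Tn assms[of x v] by (auto simp: sum.delta')
    finally show "(\<Sum>u\<in>T. F (u,v) * ind u x * delta v (y,z)) = F (x,v) * delta v (y,z)" .
  qed
  finally show ?thesis .
qed

lemma CA_gen:
  assumes "fs f" "\<And>u v. comult delta f (u,v) \<noteq> 0 \<Longrightarrow> u \<in> T \<and> v \<in> T"
  shows "(\<Sum>v\<in>T. comult delta f (x,v) * delta v (y,z)) = (\<Sum>u\<in>T. comult delta f (u,z) * delta u (x,y))"
  using fun_cong[OF coass[OF assms(1)], of "(x,y,z)"] delta_id_T[OF assms(2)] id_delta_T[OF assms(2)]
  by simp

lemma CA_m: "(\<Sum>v\<in>T. comult delta m (x,v) * delta v (y,z)) = (\<Sum>u\<in>T. comult delta m (u,z) * delta u (x,y))"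
  by (rule CA_gen[OF fsm]) (use Dm_Tn inT in fastforce)

lemma CA_b: "a \<in> Tn k \<Longrightarrow> k \<le> 4 \<Longrightarrow>
   (\<Sum>v\<in>T. delta a (x,v) * delta v (y,z)) = (\<Sum>u\<in>T. delta a (u,z) * delta u (x,y))"
  using CA_gen[OF fs_ind, of a] delta_Tn[of a k] inT[of _ "Suc k"] by (simp add: comult_ind)


definition Q where "Q x a b c d = (\<Sum>p\<in>T. \<Sum>q\<in>T. delta x (p,q) * delta p (a,b) * delta q (c,d))"
definition G where "G x a b c d = (\<Sum>s\<in>T. delta x (a,s) * (\<Sum>t\<in>T. delta s (t,d) * delta t (b,c)))"

lemma Q_sym1: "Q x a b c d = Q x c d a b"
  unfolding Q_def by (subst sum.swap) (simp add: cocom[of x] mult_ac)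

lemma G_sym: "G x a b c d = G x a c b d"
  unfolding G_def by (simp add: cocom[of _ b c])

lemma Q_G: assumes "x \<in> Tn 1" shows "Q x a b c d = G x a b c d"
proof -
  have "Q x a b c d = (\<Sum>q\<in>T. (\<Sum>p\<in>T. delta x (p,q) * delta p (a,b)) * delta q (c,d))"
    unfolding Q_def by (subst sum.swap) (simp add: sum_distrib_right)
  also have "\<dots> = (\<Sum>q\<in>T. (\<Sum>s\<in>T. delta x (a,s) * delta s (b,q)) * delta q (c,d))"
    using CA_b[OF assms, of a b] by simp
  also have "\<dots> = (\<Sum>s\<in>T. delta x (a,s) * (\<Sum>q\<in>T. delta s (b,q) * delta q (c,d)))"
    unfolding sum_distrib_right sum_distrib_left by (subst sum.swap) (simp add: mult.assoc)
  also have "\<dots> = G x a b c d"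
    unfolding G_def
  proof (rule sum.cong[OF refl])
    fix s assume "s \<in> T"
    show "delta x (a,s) * (\<Sum>q\<in>T. delta s (b,q) * delta q (c,d)) =
          delta x (a,s) * (\<Sum>t\<in>T. delta s (t,d) * delta t (b,c))"
    proof (cases "delta x (a,s) = 0")
      case False
      then have "s \<in> Tn 2" using delta_Tn[OF assms, of a s] by (simp add: numeral_2_eq_2)
      then show ?thesis using CA_b[of s 2 b c d] by simp
    qed simp
  qed
  finally show ?thesis .
qed

lemma Q_perm: assumes "x \<in> Tn 1" shows "Q x v v' u u' = Q x u v u' v'"
  using Q_sym1[of x v v' u u'] Q_G[OF assms] G_sym by metis


definition Cm where "Cm x y z = (\<Sum>u\<in>T. comult delta m (u,z) * delta u (x,y))"
definition Cb where "Cb b x y z = (\<Sum>s\<in>T. delta b (s,z) * delta s (x,y))"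

lemma swap3: "(\<Sum>x\<in>A. \<Sum>y\<in>B. \<Sum>w\<in>C. f x y w) = (\<Sum>w\<in>C. \<Sum>x\<in>A. \<Sum>y\<in>B. f x y w)"
proof -
  have "(\<Sum>x\<in>A. \<Sum>y\<in>B. \<Sum>w\<in>C. f x y w) = (\<Sum>x\<in>A. \<Sum>w\<in>C. \<Sum>y\<in>B. f x y w)"
    by (rule sum.cong[OF refl]) (rule sum.swap)
  also have "\<dots> = (\<Sum>w\<in>C. \<Sum>x\<in>A. \<Sum>y\<in>B. f x y w)" by (rule sum.swap)
  finally show ?thesis .
qed

lemma KL: "(\<Sum>x\<in>T. \<Sum>y\<in>T. Cm x y z * delta x (u,v) * delta y (u',v'))
   = (\<Sum>w\<in>T. comult delta m (w,z) * Q w u v u' v')"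
proof -
  have "(\<Sum>x\<in>T. \<Sum>y\<in>T. Cm x y z * delta x (u,v) * delta y (u',v'))
     = (\<Sum>x\<in>T. \<Sum>y\<in>T. \<Sum>w\<in>T. comult delta m (w,z) * (delta w (x,y) * delta x (u,v) * delta y (u',v')))"
    unfolding Cm_def by (simp add: sum_distrib_right sum_distrib_left mult_ac)
  also have "\<dots> = (\<Sum>w\<in>T. \<Sum>x\<in>T. \<Sum>y\<in>T. comult delta m (w,z) * (delta w (x,y) * delta x (u,v) * delta y (u',v')))"
    by (rule swap3)
  also have "\<dots> = (\<Sum>w\<in>T. comult delta m (w,z) * Q w u v u' v')"
    unfolding Q_def by (simp add: sum_distrib_left)
  finally show ?thesis .
qed

lemma KR: "(\<Sum>b\<in>T. Cm v v' b * Cb b u u' z) = (\<Sum>t\<in>T. comult delta m (t,z) * Q t v v' u u')"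
proof -
  have "(\<Sum>b\<in>T. Cm v v' b * Cb b u u' z)
     = (\<Sum>b\<in>T. \<Sum>y\<in>T. \<Sum>s\<in>T. delta y (v,v') * delta s (u,u') * (comult delta m (y,b) * delta b (s,z)))"
    unfolding Cm_def Cb_def by (simp add: sum_distrib_right sum_distrib_left mult_ac)
  also have "\<dots> = (\<Sum>y\<in>T. \<Sum>s\<in>T. \<Sum>b\<in>T. delta y (v,v') * delta s (u,u') * (comult delta m (y,b) * delta b (s,z)))"
    by (rule swap3[symmetric])
  also have "\<dots> = (\<Sum>y\<in>T. \<Sum>s\<in>T. delta y (v,v') * delta s (u,u') * (\<Sum>b\<in>T. comult delta m (y,b) * delta b (s,z)))"
    by (simp add: sum_distrib_left)
  also have "\<dots> = (\<Sum>y\<in>T. \<Sum>s\<in>T. delta y (v,v') * delta s (u,u') * (\<Sum>t\<in>T. comult delta m (t,z) * delta t (y,s)))"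
    by (simp add: CA_m)
  also have "\<dots> = (\<Sum>y\<in>T. \<Sum>s\<in>T. \<Sum>t\<in>T. comult delta m (t,z) * (delta t (y,s) * delta y (v,v') * delta s (u,u')))"
    by (simp add: sum_distrib_left mult_ac)
  also have "\<dots> = (\<Sum>t\<in>T. \<Sum>y\<in>T. \<Sum>s\<in>T. comult delta m (t,z) * (delta t (y,s) * delta y (v,v') * delta s (u,u')))"
    by (rule swap3)
  also have "\<dots> = (\<Sum>t\<in>T. comult delta m (t,z) * Q t v v' u u')"
    unfolding Q_def by (simp add: sum_distrib_left)
  finally show ?thesis .
qed

lemma KLR: "(\<Sum>x\<in>T. \<Sum>y\<in>T. Cm x y z * delta x (u,v) * delta y (u',v')) = (\<Sum>b\<in>T. Cm v v' b * Cb b u u' z)"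
  unfolding KL KR
proof (rule sum.cong[OF refl])
  fix t assume "t \<in> T"
  show "comult delta m (t,z) * Q t u v u' v' = comult delta m (t,z) * Q t v v' u u'"
    using Dm_Tn[of t z] Q_perm[of t v v' u u'] by (cases "comult delta m (t,z) = 0") auto
qed


lemma EQ_T:
  assumes k: "k \<le> 4" and F: "\<And>u v. comult delta f (u,v) \<noteq> 0 \<Longrightarrow> u \<in> Tn k \<and> v \<in> Tn k"
  shows "EQ iota delta r f z = (\<Sum>x\<in>T. \<Sum>y\<in>T. iota (\<Sum>u\<in>T. comult delta f (u,z) * delta u (x,y)) * r x y)"
proof -
  have FT: "\<And>u v. comult delta f (u,v) \<noteq> 0 \<Longrightarrow> u \<in> T \<and> v \<in> T"
  proof -
    have k5: "k \<le> 5" using k by simp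
    fix u v assume "comult delta f (u,v) \<noteq> 0"
    then show "u \<in> T \<and> v \<in> T" using F inT[OF _ k5] by blast
  qed
  have C2: "\<And>x y w. comult2 delta f (x,y,w) = (\<Sum>u\<in>T. comult delta f (u,w) * delta u (x,y))"
    unfolding comult2_def by (rule delta_id_T[OF FT])
  have nz: "comult2 delta f p \<noteq> 0 \<Longrightarrow> p \<in> T\<times>T\<times>T" for p
  proof -
    obtain x y w where p: "p = (x,y,w)" by (cases p) auto
    assume "comult2 delta f p \<noteq> 0"
    then obtain u where "comult delta f (u,w) * delta u (x,y) \<noteq> 0"
      unfolding p C2 by (auto elim: sum.not_neutral_contains_not_neutral)
    then have "comult delta f (u,w) \<noteq> 0" "delta u (x,y) \<noteq> 0" by auto
    then have "u \<in> Tn k" "w \<in> Tn k" "x \<in> Tn (Suc k)" "y \<in> Tn (Suc k)"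
      using F delta_Tn by blast+
    then show ?thesis unfolding p using k inT by (auto simp del: Tn_def)
  qed
  have "EQ iota delta r f z = (\<Sum>(x,y,w)\<in>T\<times>T\<times>T. iota (comult2 delta f (x,y,w)) * r x y * iota (ind w z))"
    unfolding EQ_def by (rule sum_supp_eq) (use nz fin_Tn calg_zero[OF hom] in auto)
  also have "\<dots> = (\<Sum>x\<in>T. \<Sum>y\<in>T. \<Sum>w\<in>T. iota (comult2 delta f (x,y,w)) * r x y * iota (ind w z))"
    by (rule sum_prod3)
  also have "\<dots> = (\<Sum>x\<in>T. \<Sum>y\<in>T. iota (\<Sum>u\<in>T. comult delta f (u,z) * delta u (x,y)) * r x y)"
  proof (intro sum.cong refl)
    fix x y
    have "(\<Sum>w\<in>T. iota (comult2 delta f (x,y,w)) * r x y * iota (ind w z))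
        = (\<Sum>w\<in>T. if z = w then iota (comult2 delta f (x,y,w)) * r x y else 0)"
      by (rule sum.cong) (auto simp: calg_ind[OF hom])
    also have "\<dots> = iota (comult2 delta f (x,y,z)) * r x y"
    proof (cases "z \<in> T")
      case False
      then have "comult2 delta f (x,y,z) = 0" using nz by blast
      then show ?thesis using False by (simp add: sum.delta' fin_Tn calg_zero[OF hom])
    qed (simp add: sum.delta' fin_Tn)
    finally show "(\<Sum>w\<in>T. iota (comult2 delta f (x,y,w)) * r x y * iota (ind w z))
        = iota (\<Sum>u\<in>T. comult delta f (u,z) * delta u (x,y)) * r x y" by (simp add: C2)
  qed
  finally show ?thesis .
qed

lemma conv_T:
  assumes "x \<in> Tn 4" "y \<in> Tn 4"
  shows "conv iota delta r1 r2 x y = (\<Sum>u\<in>T. \<Sum>v\<in>T. \<Sum>u'\<in>T. \<Sum>v'\<in>T.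
     iota (delta x (u,v)) * iota (delta y (u',v')) * r1 u u' * r2 v v')"
proof -
  have X: "delta x p \<noteq> 0 \<Longrightarrow> p \<in> T\<times>T" for p using delta_Tn[OF assms(1), of "fst p" "snd p"] by (cases p) simp
  have Y: "delta y p \<noteq> 0 \<Longrightarrow> p \<in> T\<times>T" for p using delta_Tn[OF assms(2), of "fst p" "snd p"] by (cases p) simp
  have "conv iota delta r1 r2 x y = (\<Sum>(u,v)\<in>T\<times>T. \<Sum>(u',v')\<in>T\<times>T.
       iota (delta x (u,v)) * iota (delta y (u',v')) * r1 u u' * r2 v v')"
    unfolding conv_def
    apply (rule trans[OF sum_supp_eq[where S="T\<times>T"]])
      apply (simp add: fin_Tn)
     apply (use X in blast)
    apply (clarsimp simp: calg_zero[OF hom])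
    apply (rule sum.cong[OF refl])
    apply (clarsimp)
    apply (rule sum_supp_eq)
      apply (simp add: fin_Tn)
     apply (use Y in blast)
    apply (clarsimp simp: calg_zero[OF hom])
    done
  also have "\<dots> = (\<Sum>u\<in>T. \<Sum>v\<in>T. \<Sum>u'\<in>T. \<Sum>v'\<in>T.
     iota (delta x (u,v)) * iota (delta y (u',v')) * r1 u u' * r2 v v')"
    by (simp add: sum_prod2)
  finally show ?thesis .
qed


lemma swap_in4: "(\<Sum>y\<in>B. \<Sum>u\<in>C1. \<Sum>v\<in>C2. \<Sum>u'\<in>C3. \<Sum>v'\<in>C4. f y u v u' v') =
   (\<Sum>u\<in>C1. \<Sum>v\<in>C2. \<Sum>u'\<in>C3. \<Sum>v'\<in>C4. \<Sum>y\<in>B. f y u v u' v')"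
  apply (rule trans[OF sum.swap], rule sum.cong[OF refl])
  apply (rule trans[OF sum.swap], rule sum.cong[OF refl])
  apply (rule trans[OF sum.swap], rule sum.cong[OF refl])
  apply (rule sum.swap)
  done

lemma swap6: "(\<Sum>x\<in>A. \<Sum>y\<in>B. \<Sum>u\<in>C1. \<Sum>v\<in>C2. \<Sum>u'\<in>C3. \<Sum>v'\<in>C4. f x y u v u' v') =
   (\<Sum>u\<in>C1. \<Sum>v\<in>C2. \<Sum>u'\<in>C3. \<Sum>v'\<in>C4. \<Sum>x\<in>A. \<Sum>y\<in>B. f x y u v u' v')"
  apply (subst swap_in4)
  apply (rule swap_in4[where f="\<lambda>x u v u' v'. \<Sum>y\<in>B. f x y u v u' v'"])
  done

lemma Cm_nz: "Cm x y z \<noteq> 0 \<Longrightarrow> x \<in> Tn 2 \<and> y \<in> Tn 2 \<and> z \<in> Tn 1"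
proof -
  assume "Cm x y z \<noteq> 0"
  then obtain u where "comult delta m (u,z) * delta u (x,y) \<noteq> 0"
    unfolding Cm_def by (auto elim: sum.not_neutral_contains_not_neutral)
  then show ?thesis using Dm_Tn[of u z] delta_Tn[of u 1 x y] by (auto simp: numeral_2_eq_2)
qed

lemma LHS:
  "EQ iota delta (conv iota delta r1 r2) m z = (\<Sum>u\<in>T. \<Sum>v\<in>T. \<Sum>u'\<in>T. \<Sum>v'\<in>T.
      iota (\<Sum>x\<in>T. \<Sum>y\<in>T. Cm x y z * delta x (u,v) * delta y (u',v')) * r1 u u' * r2 v v')"
proof -
  have "EQ iota delta (conv iota delta r1 r2) m z = (\<Sum>x\<in>T. \<Sum>y\<in>T. iota (Cm x y z) * conv iota delta r1 r2 x y)"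
    unfolding Cm_def by (rule EQ_T[of 1]) (use Dm_Tn in auto)
  also have "\<dots> = (\<Sum>x\<in>T. \<Sum>y\<in>T. \<Sum>u\<in>T. \<Sum>v\<in>T. \<Sum>u'\<in>T. \<Sum>v'\<in>T.
      iota (Cm x y z) * (iota (delta x (u,v)) * iota (delta y (u',v')) * r1 u u' * r2 v v'))"
  proof (intro sum.cong refl)
    fix x y
    show "iota (Cm x y z) * conv iota delta r1 r2 x y = (\<Sum>u\<in>T. \<Sum>v\<in>T. \<Sum>u'\<in>T. \<Sum>v'\<in>T.
      iota (Cm x y z) * (iota (delta x (u,v)) * iota (delta y (u',v')) * r1 u u' * r2 v v'))"
    proof (cases "Cm x y z = 0")
      case False
      then have "x \<in> Tn 4" "y \<in> Tn 4" using Cm_nz Tn_mono[of 2 4] by auto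
      then show ?thesis by (simp add: conv_T sum_distrib_left)
    qed (simp add: calg_zero[OF hom])
  qed
  also have "\<dots> = (\<Sum>u\<in>T. \<Sum>v\<in>T. \<Sum>u'\<in>T. \<Sum>v'\<in>T. \<Sum>x\<in>T. \<Sum>y\<in>T.
      iota (Cm x y z) * (iota (delta x (u,v)) * iota (delta y (u',v')) * r1 u u' * r2 v v'))"
    by (rule swap6)
  also have "\<dots> = (\<Sum>u\<in>T. \<Sum>v\<in>T. \<Sum>u'\<in>T. \<Sum>v'\<in>T.
      iota (\<Sum>x\<in>T. \<Sum>y\<in>T. Cm x y z * delta x (u,v) * delta y (u',v')) * r1 u u' * r2 v v')"
    by (simp add: calg_sum[OF hom] calg_mult[OF hom] sum_distrib_right sum_distrib_left mult_ac)
  finally show ?thesis .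
qed


lemma RHS:
  "EQ_A iota delta r1 (EQ iota delta r2 m) z = (\<Sum>u\<in>T. \<Sum>v\<in>T. \<Sum>u'\<in>T. \<Sum>v'\<in>T.
      iota (\<Sum>b\<in>T. Cm v v' b * Cb b u u' z) * r1 u u' * r2 v v')"
proof -
  define E where "E = EQ iota delta r2 m"
  have Eb: "E b = (\<Sum>x\<in>T. \<Sum>y\<in>T. iota (Cm x y b) * r2 x y)" for b
    unfolding E_def Cm_def by (rule EQ_T[of 1]) (use Dm_Tn in auto)
  have E0: "b \<notin> Tn 1 \<Longrightarrow> (\<Sum>x\<in>T. \<Sum>y\<in>T. iota (Cm x y b) * r2 x y) = 0" for b
  proof -
    assume "b \<notin> Tn 1"
    then have "\<And>x y. Cm x y b = 0" using Cm_nz by blast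
    then show ?thesis by (simp add: calg_zero[OF hom])
  qed
  have "EQ_A iota delta r1 E z = (\<Sum>b\<in>T. E b * EQ iota delta r1 (ind b) z)"
    unfolding EQ_A_def
    by (rule sum_supp_eq) (use fin_Tn E0 Eb inT[of _ 1] in \<open>auto simp del: One_nat_def\<close>)
  also have "\<dots> = (\<Sum>b\<in>T. (\<Sum>u\<in>T. \<Sum>u'\<in>T. iota (Cb b u u' z) * r1 u u') *
        (\<Sum>v\<in>T. \<Sum>v'\<in>T. iota (Cm v v' b) * r2 v v'))"
  proof (rule sum.cong[OF refl])
    fix b assume "b \<in> T"
    show "E b * EQ iota delta r1 (ind b) z = (\<Sum>u\<in>T. \<Sum>u'\<in>T. iota (Cb b u u' z) * r1 u u') *
        (\<Sum>v\<in>T. \<Sum>v'\<in>T. iota (Cm v v' b) * r2 v v')"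
    proof (cases "b \<in> Tn 1")
      case True
      have "EQ iota delta r1 (ind b) z = (\<Sum>u\<in>T. \<Sum>u'\<in>T. iota (Cb b u u' z) * r1 u u')"
        unfolding Cb_def comult_ind[symmetric, of delta b]
        by (rule EQ_T[of 2]) (use delta_Tn[OF True] in \<open>auto simp: comult_ind numeral_2_eq_2\<close>)
      then show ?thesis by (simp add: Eb mult.commute)
    qed (simp add: Eb E0)
  qed
  also have "\<dots> = (\<Sum>b\<in>T. \<Sum>u\<in>T. \<Sum>u'\<in>T. \<Sum>v\<in>T. \<Sum>v'\<in>T.
      iota (Cb b u u' z) * r1 u u' * (iota (Cm v v' b) * r2 v v'))"
    by (simp only: sum_distrib_right, simp only: sum_distrib_left)
  also have "\<dots> = (\<Sum>u\<in>T. \<Sum>u'\<in>T. \<Sum>v\<in>T. \<Sum>v'\<in>T. \<Sum>b\<in>T.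
      iota (Cb b u u' z) * r1 u u' * (iota (Cm v v' b) * r2 v v'))"
    by (rule swap_in4)
  also have "\<dots> = (\<Sum>u\<in>T. \<Sum>v\<in>T. \<Sum>u'\<in>T. \<Sum>v'\<in>T. \<Sum>b\<in>T.
      iota (Cb b u u' z) * r1 u u' * (iota (Cm v v' b) * r2 v v'))"
    by (rule sum.cong[OF refl], rule sum.swap)
  also have "\<dots> = (\<Sum>u\<in>T. \<Sum>v\<in>T. \<Sum>u'\<in>T. \<Sum>v'\<in>T.
      iota (\<Sum>b\<in>T. Cm v v' b * Cb b u u' z) * r1 u u' * r2 v v')"
    by (simp add: calg_sum[OF hom] calg_mult[OF hom] sum_distrib_right sum_distrib_left mult_ac)
  finally show ?thesis unfolding E_def .
qed

lemma main: "EQ iota delta (conv iota delta r1 r2) m = EQ_A iota delta r1 (EQ iota delta r2 m)"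
  by (rule ext) (simp add: LHS RHS KLR)

end

theorem lemma2p7:
  fixes mu :: "'b \<Rightarrow> 'b \<Rightarrow> 'b \<Rightarrow> complex" and one :: "'b \<Rightarrow> complex"
    and delta :: "'b \<Rightarrow> 'b \<times> 'b \<Rightarrow> complex" and eps :: "'b \<Rightarrow> complex"
    and S :: "'b \<Rightarrow> 'b \<Rightarrow> complex"
    and iota :: "complex \<Rightarrow> 'a::comm_ring_1"
    and r1 r2 r :: "'b \<Rightarrow> 'b \<Rightarrow> 'a"
    and m :: "'b \<Rightarrow> complex"
  assumes "hopf_algebra mu one delta eps S"
    and "commutative mu"
    and "cocommutative delta"
    and "calg_hom iota"
    and "bicharacter mu one delta eps iota r1"
    and "bicharacter mu one delta eps iota r2"
    and "r = conv iota delta r1 r2"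
    and "fs m"
  shows "EQ iota delta r m = EQ_A iota delta r1 (EQ iota delta r2 m)"
proof -
  interpret EQs delta m iota
  proof
    show "fs (delta a)" for a using assms(1) by (simp add: hopf_algebra_def)
    show "fs m" by fact
    show "fs f \<Longrightarrow> delta_id delta (comult delta f) = id_delta delta (comult delta f)" for f
      using assms(1) by (simp add: hopf_algebra_def)
    show "delta a (x,y) = delta a (y,x)" for a x y
      using assms(3) fs_ind[of a] by (simp add: cocommutative_def comult_ind[symmetric, of delta a])
    show "calg_hom iota" by fact
  qed
  show ?thesis using main assms(7) by simp
qed

end
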